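(* Let $T$ be a ring with $J(T)=0$. Then either $T$ has a maximal subring or the center $C(T)$ of $T$ is integrally closed in $T$, i.e., every element of $T$ which is a root of a monic polynomial with coefficients in $C(T)$ belongs to $C(T)$.
   Context: All rings are associative with identity $1\neq0$; subrings contain the identity. A maximal subring of $T$ is a proper subring with no subring strictly between it and $T$. $J(T)$ is the Jacobson radical of $T$. *)

theory Defs
  imports Main
begin

text \<open>The ring T is the (possibly noncommutative) type 'a of class ring_1
  (associative, with identity, 1 \<noteq> 0). Subrings contain 1.\<close>

definition is_subring :: "'a::ring_1 set \<Rightarrow> bool" where
  "is_subring S \<longleftrightarrow> 1 \<in> S \<and> (\<forall>x\<in>S. \<forall>y\<in>S. x - y \<in> S \<and> x * y \<in> S)"

definition maximal_subring :: "'a::ring_1 set \<Rightarrow> bool" where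
  "maximal_subring S \<longleftrightarrow> is_subring S \<and> S \<noteq> UNIV \<and>
     (\<forall>R. is_subring R \<and> S \<subseteq> R \<longrightarrow> R = S \<or> R = UNIV)"

definition left_ideal :: "'a::ring_1 set \<Rightarrow> bool" where
  "left_ideal I \<longleftrightarrow> 0 \<in> I \<and> (\<forall>x\<in>I. \<forall>y\<in>I. x - y \<in> I) \<and> (\<forall>r. \<forall>x\<in>I. r * x \<in> I)"

definition maximal_left_ideal :: "'a::ring_1 set \<Rightarrow> bool" where
  "maximal_left_ideal I \<longleftrightarrow> left_ideal I \<and> I \<noteq> UNIV \<and>
     (\<forall>K. left_ideal K \<and> I \<subseteq> K \<longrightarrow> K = I \<or> K = UNIV)"

definition jacobson_radical :: "'a::ring_1 set" where
  "jacobson_radical = \<Inter> {I. maximal_left_ideal I}"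

definition ring_center :: "'a::ring_1 set" where
  "ring_center = {c. \<forall>x. c * x = x * c}"

definition integrally_closed_in :: "'a::ring_1 set \<Rightarrow> bool" where
  "integrally_closed_in S \<longleftrightarrow>
     (\<forall>t. (\<exists>n c. (\<forall>i<n. c i \<in> S) \<and> t ^ n + (\<Sum>i<n. c i * t ^ i) = 0) \<longrightarrow> t \<in> S)"

end

theory Submission
  imports Defs
begin

lemma li_0: "left_ideal M \<Longrightarrow> 0 \<in> M" unfolding left_ideal_def by blast
lemma li_diff: "left_ideal M \<Longrightarrow> x \<in> M \<Longrightarrow> y \<in> M \<Longrightarrow> x - y \<in> M" unfolding left_ideal_def by blast
lemma li_mult: "left_ideal M \<Longrightarrow> x \<in> M \<Longrightarrow> r * x \<in> M" unfolding left_ideal_def by blast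
lemma li_neg: "left_ideal M \<Longrightarrow> x \<in> M \<Longrightarrow> - x \<in> M"
  using li_diff[of M 0 x] li_0[of M] by simp
lemma li_add: "left_ideal M \<Longrightarrow> x \<in> M \<Longrightarrow> y \<in> M \<Longrightarrow> x + y \<in> M"
  using li_diff[of M x "- y"] li_neg[of M y] by simp
lemma li_sum: assumes "left_ideal M" "finite A" "\<And>i. i \<in> A \<Longrightarrow> f i \<in> M" shows "sum f A \<in> M"
  using assms(2,3) by (induction A rule: finite_induct) (auto simp: li_0[OF assms(1)] li_add[OF assms(1)])
lemma li_one: "left_ideal M \<Longrightarrow> M \<noteq> UNIV \<Longrightarrow> (1::'a::ring_1) \<notin> M"
  using li_mult[of M 1] by auto

lemma sr_one: "is_subring S \<Longrightarrow> 1 \<in> S" unfolding is_subring_def by blast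
lemma sr_diff: "is_subring S \<Longrightarrow> x \<in> S \<Longrightarrow> y \<in> S \<Longrightarrow> x - y \<in> S" unfolding is_subring_def by blast
lemma sr_mult: "is_subring S \<Longrightarrow> x \<in> S \<Longrightarrow> y \<in> S \<Longrightarrow> x * y \<in> S" unfolding is_subring_def by blast
lemma sr_0: "is_subring S \<Longrightarrow> 0 \<in> S" using sr_diff[of S 1 1] sr_one[of S] by simp
lemma sr_add: "is_subring S \<Longrightarrow> x \<in> S \<Longrightarrow> y \<in> S \<Longrightarrow> x + y \<in> S"
  using sr_diff[of S x "0 - y"] sr_diff[of S 0 y] sr_0[of S] by simp
lemma sr_sum: assumes "is_subring S" "finite A" "\<And>i. i \<in> A \<Longrightarrow> f i \<in> S" shows "sum f A \<in> S"
  using assms(2,3) by (induction A rule: finite_induct) (auto simp: sr_0[OF assms(1)] sr_add[OF assms(1)])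

lemma left_inv:
  assumes M: "maximal_left_ideal M" and x: "(x::'a::ring_1) \<notin> M"
  shows "\<exists>y. y * x - 1 \<in> M"
proof -
  have li: "left_ideal M" using M unfolding maximal_left_ideal_def by blast
  define L where "L = {r * x + m | r m. m \<in> M}"
  have "left_ideal L"
    unfolding left_ideal_def
  proof (intro conjI ballI allI)
    have "(0::'a) = 0 * x + 0" by simp
    then show "0 \<in> L" unfolding L_def using li_0[OF li] by blast
  next
    fix a b assume "a \<in> L" "b \<in> L"
    then obtain r m r' m' where "a = r * x + m" "m \<in> M" "b = r' * x + m'" "m' \<in> M"
      unfolding L_def by blast
    then have "a - b = (r - r') * x + (m - m')" "m - m' \<in> M"
      by (auto simp: algebra_simps li_diff[OF li])
    then show "a - b \<in> L" unfolding L_def by blast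
  next
    fix c a assume "a \<in> L"
    then obtain r m where "a = r * x + m" "m \<in> M" unfolding L_def by blast
    then have "c * a = (c * r) * x + c * m" "c * m \<in> M"
      by (auto simp: algebra_simps li_mult[OF li])
    then show "c * a \<in> L" unfolding L_def by blast
  qed
  moreover have "M \<subseteq> L"
  proof
    fix m assume "m \<in> M"
    moreover have "m = 0 * x + m" by simp
    ultimately show "m \<in> L" unfolding L_def by blast
  qed
  moreover have "x = 1 * x + 0" by simp
  then have "x \<in> L" unfolding L_def using li_0[OF li] by blast
  ultimately have "L = UNIV" using M x unfolding maximal_left_ideal_def by blast
  then have "1 \<in> L" by simp
  then obtain r m where "1 = r * x + m" "m \<in> M" unfolding L_def by blast
  then have "r * x - 1 = - m" by (simp add: algebra_simps)
  then show ?thesis using li_neg[OF li \<open>m \<in> M\<close>] by metis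
qed

lemma inv_mod:
  assumes M: "maximal_left_ideal M" and two: "\<And>m r. m \<in> M \<Longrightarrow> m * r \<in> M"
    and x: "(x::'a::ring_1) \<notin> M"
  shows "\<exists>y. x * y - 1 \<in> M \<and> y * x - 1 \<in> M"
proof -
  have li: "left_ideal M" and nU: "M \<noteq> UNIV" using M unfolding maximal_left_ideal_def by blast+
  obtain y where y: "y * x - 1 \<in> M" using left_inv[OF M x] by blast
  have "y \<notin> M"
  proof
    assume "y \<in> M"
    then have "y * x \<in> M" using two by blast
    then have "y * x - (y * x - 1) \<in> M" using li_diff[OF li] y by blast
    then show False using li_one[OF li nU] by simp
  qed
  then obtain z where z: "z * y - 1 \<in> M" using left_inv[OF M] by blast
  have "x - z = z * (y * x - 1) - (z * y - 1) * x" by (simp add: algebra_simps)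
  moreover have "z * (y * x - 1) \<in> M" using li_mult[OF li y] .
  moreover have "(z * y - 1) * x \<in> M" using two[OF z] .
  ultimately have xz: "x - z \<in> M" using li_diff[OF li] by metis
  have "x * y - 1 = (x - z) * y + (z * y - 1)" by (simp add: algebra_simps)
  moreover have "(x - z) * y \<in> M" using two[OF xz] .
  ultimately have "x * y - 1 \<in> M" using li_add[OF li _ z] by metis
  then show ?thesis using y by blast
qed

lemma lin_sys:
  assumes M: "maximal_left_ideal M" and two: "\<And>m r. m \<in> M \<Longrightarrow> m * r \<in> M"
  shows "finite I \<Longrightarrow> m < card I \<Longrightarrow>
    \<exists>c. (\<exists>i\<in>I. c i \<notin> M) \<and> (\<forall>j<m. (\<Sum>i\<in>I. a j i * c i) \<in> (M::'a::ring_1 set))"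
proof (induction m arbitrary: I a)
  case 0
  have li: "left_ideal M" and nU: "M \<noteq> UNIV" using M unfolding maximal_left_ideal_def by blast+
  from 0 have "I \<noteq> {}" by auto
  then obtain i where "i \<in> I" by blast
  then show ?case using li_one[OF li nU] by (intro exI[of _ "\<lambda>_. 1"]) auto
next
  case (Suc m)
  have li: "left_ideal M" and nU: "M \<noteq> UNIV" using M unfolding maximal_left_ideal_def by blast+
  show ?case
  proof (cases "\<forall>i\<in>I. a m i \<in> M")
    case True
    obtain c where c: "\<exists>i\<in>I. c i \<notin> M" "\<forall>j<m. (\<Sum>i\<in>I. a j i * c i) \<in> M"
      using Suc.IH[of I a] Suc.prems by auto
    have "(\<Sum>i\<in>I. a m i * c i) \<in> M"
      using True two by (intro li_sum[OF li Suc.prems(1)]) auto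
    then show ?thesis using c by (intro exI[of _ c]) (auto simp: less_Suc_eq)
  next
    case False
    then obtain i0 where i0: "i0 \<in> I" "a m i0 \<notin> M" by blast
    obtain e where e: "a m i0 * e - 1 \<in> M" using inv_mod[OF M two i0(2)] by blast
    define I' where "I' = I - {i0}"
    define b where "b = (\<lambda>j i. a j i - a j i0 * e * a m i)"
    have fI': "finite I'" using Suc.prems unfolding I'_def by auto
    have cI': "m < card I'" using Suc.prems i0 unfolding I'_def by auto
    obtain c' where c': "\<exists>i\<in>I'. c' i \<notin> M" "\<forall>j<m. (\<Sum>i\<in>I'. b j i * c' i) \<in> M"
      using Suc.IH[OF fI' cI', of b] by blast
    define X where "X = (\<Sum>i\<in>I'. a m i * c' i)"
    define c where "c = c'(i0 := - (e * X))"
    have sumc: "(\<Sum>i\<in>I. a j i * c i) = a j i0 * (- (e * X)) + (\<Sum>i\<in>I'. a j i * c' i)" for j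
    proof -
      have "(\<Sum>i\<in>I. a j i * c i) = a j i0 * c i0 + (\<Sum>i\<in>I'. a j i * c i)"
        unfolding I'_def using Suc.prems(1) i0(1) by (simp add: sum.remove)
      also have "(\<Sum>i\<in>I'. a j i * c i) = (\<Sum>i\<in>I'. a j i * c' i)"
        by (rule sum.cong) (auto simp: c_def I'_def)
      finally show ?thesis by (simp add: c_def)
    qed
    have "\<exists>i\<in>I. c i \<notin> M" using c'(1) unfolding c_def I'_def by auto
    moreover have "(\<Sum>i\<in>I. a j i * c i) \<in> M" if j: "j < Suc m" for j
    proof (cases "j = m")
      case True
      have "a m i0 * (- (e * X)) + X = - ((a m i0 * e - 1) * X)" by (simp add: algebra_simps)
      moreover have "- ((a m i0 * e - 1) * X) \<in> M" using li_neg[OF li two[OF e]] .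
      ultimately show ?thesis using sumc[of j] True X_def by simp
    next
      case False
      then have "j < m" using j by simp
      have "(\<Sum>i\<in>I'. b j i * c' i) = (\<Sum>i\<in>I'. a j i * c' i) - a j i0 * e * X"
        unfolding b_def X_def by (simp add: left_diff_distrib sum_subtractf sum_distrib_left mult.assoc)
      moreover have "a j i0 * (- (e * X)) = - (a j i0 * e * X)" by (simp add: mult.assoc)
      ultimately have "(\<Sum>i\<in>I. a j i * c i) = (\<Sum>i\<in>I'. b j i * c' i)"
        using sumc[of j] by (metis add.commute diff_conv_add_uminus)
      then show ?thesis using c'(2) \<open>j < m\<close> by simp
    qed
    ultimately show ?thesis by blast
  qed
qed


lemma dep:
  assumes M: "maximal_left_ideal M" and two: "\<And>m r. m \<in> M \<Longrightarrow> m * r \<in> M"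
    and fc: "\<forall>i<n. f i \<in> ring_center"
    and ft: "t ^ n + (\<Sum>i<n. f i * t ^ i) = (0::'a::ring_1)"
    and fI: "finite I" and nI: "n < card I"
  shows "\<exists>c. (\<forall>i\<in>I. t * c i - c i * t \<in> M) \<and> (\<exists>i\<in>I. c i \<notin> M) \<and> (\<Sum>i\<in>I. x i * c i) \<in> M"
proof -
  have li: "left_ideal M" and nU: "M \<noteq> UNIV" using M unfolding maximal_left_ideal_def by blast+
  have one: "(1::'a) \<notin> M" using li_one[OF li nU] .
  have n0: "0 < n"
  proof (rule ccontr)
    assume "\<not> 0 < n" then have "n = 0" by simp
    then show False using ft by simp
  qed
  have tn: "t ^ n = - (\<Sum>l<n. f l * t ^ l)" using ft by (simp add: eq_neg_iff_add_eq_0)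
  have cent: "\<And>l y. l < n \<Longrightarrow> f l * y = y * f l" using fc unfolding ring_center_def by blast
  define sol where "sol c \<longleftrightarrow> (\<exists>i\<in>I. c i \<notin> M) \<and> (\<forall>j<n. (\<Sum>i\<in>I. x i * t ^ j * c i) \<in> M)" for c
  have ex: "\<exists>c. sol c" using lin_sys[OF M two fI nI, of "\<lambda>j i. x i * t ^ j"] unfolding sol_def by blast
  define supp where "supp c = {i\<in>I. c i \<notin> M}" for c
  define k where "k = (LEAST k. \<exists>c. sol c \<and> card (supp c) = k)"
  obtain c where c: "sol c" "card (supp c) = k"
    using LeastI_ex[of "\<lambda>k. \<exists>c. sol c \<and> card (supp c) = k"] ex unfolding k_def by blast
  have kmin: "k \<le> card (supp c')" if "sol c'" for c'
    unfolding k_def by (rule Least_le) (use that in blast)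
  obtain i0 where i0: "i0 \<in> I" "c i0 \<notin> M" using c(1) unfolding sol_def by blast
  obtain d where d: "c i0 * d - 1 \<in> M" using inv_mod[OF M two i0(2)] by blast
  define cd where "cd i = c i * d" for i
  have sol_cd: "(\<Sum>i\<in>I. x i * t ^ j * cd i) \<in> M" if "j < n" for j
  proof -
    have "(\<Sum>i\<in>I. x i * t ^ j * cd i) = (\<Sum>i\<in>I. x i * t ^ j * c i) * d"
      unfolding cd_def by (simp add: sum_distrib_right mult.assoc)
    then show ?thesis using two c(1) that unfolding sol_def by simp
  qed
  have cd_i0: "cd i0 \<notin> M"
  proof
    assume "cd i0 \<in> M"
    then have "cd i0 - (cd i0 - 1) \<in> M" using li_diff[OF li] d unfolding cd_def by blast
    then show False using one by simp
  qed
  define c2 where "c2 i = t * cd i - cd i * t" for i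
  have allM: "\<forall>i\<in>I. c2 i \<in> M"
  proof (rule ccontr)
    assume "\<not> (\<forall>i\<in>I. c2 i \<in> M)"
    then have nz: "\<exists>i\<in>I. c2 i \<notin> M" by blast
    have eqs: "(\<Sum>i\<in>I. x i * t ^ j * c2 i) \<in> M" if j: "j < n" for j
    proof -
      have split: "(\<Sum>i\<in>I. x i * t ^ j * c2 i) =
          (\<Sum>i\<in>I. x i * t ^ (Suc j) * cd i) - (\<Sum>i\<in>I. x i * t ^ j * cd i) * t"
      proof -
        have "\<And>i. x i * t ^ j * c2 i = x i * t ^ (Suc j) * cd i - x i * t ^ j * cd i * t"
          unfolding c2_def by (simp add: right_diff_distrib mult.assoc power_Suc2 del: power_Suc)
        then show ?thesis by (simp add: sum_subtractf sum_distrib_right)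
      qed
      have A: "(\<Sum>i\<in>I. x i * t ^ (Suc j) * cd i) \<in> M"
      proof (cases "Suc j < n")
        case True then show ?thesis using sol_cd by blast
      next
        case False
        then have sj: "Suc j = n" using j by simp
        have "(\<Sum>i\<in>I. x i * t ^ n * cd i) = (\<Sum>i\<in>I. - (\<Sum>l<n. f l * (x i * t ^ l * cd i)))"
        proof (rule sum.cong)
          fix i assume "i \<in> I"
          have "x i * t ^ n * cd i = - (\<Sum>l<n. x i * (f l * t ^ l) * cd i)"
            by (simp add: tn sum_distrib_left sum_distrib_right)
          also have "(\<Sum>l<n. x i * (f l * t ^ l) * cd i) = (\<Sum>l<n. f l * (x i * t ^ l * cd i))"
          proof (rule sum.cong)
            fix l assume "l \<in> {..<n}"
            then have "x i * f l = f l * x i" using cent by simp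
            then show "x i * (f l * t ^ l) * cd i = f l * (x i * t ^ l * cd i)"
              by (metis mult.assoc)
          qed simp
          finally show "x i * t ^ n * cd i = - (\<Sum>l<n. f l * (x i * t ^ l * cd i))" .
        qed simp
        also have "\<dots> = - (\<Sum>l<n. f l * (\<Sum>i\<in>I. x i * t ^ l * cd i))"
          by (simp add: sum_negf sum.swap[of _ I] sum_distrib_left)
        finally have "(\<Sum>i\<in>I. x i * t ^ n * cd i) = - (\<Sum>l<n. f l * (\<Sum>i\<in>I. x i * t ^ l * cd i))" .
        moreover have "(\<Sum>l<n. f l * (\<Sum>i\<in>I. x i * t ^ l * cd i)) \<in> M"
          by (rule li_sum[OF li]) (auto intro: li_mult[OF li] sol_cd)
        ultimately show ?thesis using sj li_neg[OF li] by simp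
      qed
      have "(\<Sum>i\<in>I. x i * t ^ j * cd i) * t \<in> M" using two sol_cd j by blast
      then show ?thesis using split A li_diff[OF li] by simp
    qed
    have sol2: "sol c2" unfolding sol_def using nz eqs by blast
    have "supp c2 \<subseteq> supp c - {i0}"
    proof
      fix i assume i: "i \<in> supp c2"
      then have iI: "i \<in> I" and nM: "c2 i \<notin> M" unfolding supp_def by auto
      have "cd i \<notin> M"
      proof
        assume "cd i \<in> M"
        then have "t * cd i \<in> M" "cd i * t \<in> M" using li_mult[OF li] two by blast+
        then show False using nM li_diff[OF li] unfolding c2_def by blast
      qed
      then have "c i \<notin> M" unfolding cd_def using two by blast
      moreover have "i \<noteq> i0"
      proof
        assume "i = i0"
        have "c2 i0 = t * (cd i0 - 1) - (cd i0 - 1) * t" unfolding c2_def by (simp add: algebra_simps)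
        moreover have "t * (cd i0 - 1) \<in> M" "(cd i0 - 1) * t \<in> M"
          using li_mult[OF li] two d unfolding cd_def by blast+
        ultimately have "c2 i0 \<in> M" using li_diff[OF li] by simp
        then show False using nM \<open>i = i0\<close> by simp
      qed
      ultimately show "i \<in> supp c - {i0}" using iI unfolding supp_def by auto
    qed
    moreover have "i0 \<in> supp c" using i0 unfolding supp_def by auto
    moreover have "finite (supp c)" using fI unfolding supp_def by auto
    ultimately have "card (supp c2) < card (supp c)"
      using card_mono[of "supp c - {i0}" "supp c2"] card_Diff1_less[of "supp c" i0] by auto
    then show False using kmin[OF sol2] c(2) by simp
  qed
  show ?thesis
  proof (intro exI[of _ cd] conjI)
    show "\<forall>i\<in>I. t * cd i - cd i * t \<in> M" using allM unfolding c2_def by blast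
    show "\<exists>i\<in>I. cd i \<notin> M" using i0 cd_i0 by blast
    show "(\<Sum>i\<in>I. x i * cd i) \<in> M" using sol_cd[OF n0] by simp
  qed
qed


lemma maxsub_exists:
  assumes S: "is_subring (S::'a::ring_1 set)" "S \<noteq> UNIV" and X: "finite X"
    and gen: "\<And>R. is_subring R \<Longrightarrow> S \<subseteq> R \<Longrightarrow> X \<subseteq> R \<Longrightarrow> R = UNIV"
  shows "\<exists>S'::'a set. maximal_subring S'"
proof -
  define A where "A = {R. is_subring R \<and> S \<subseteq> R \<and> R \<noteq> UNIV}"
  have SA: "S \<in> A" using S unfolding A_def by blast
  have XnE: "X \<noteq> {}" using gen[of S] S by auto
  have "\<forall>C\<in>chains A. \<exists>U\<in>A. \<forall>R\<in>C. R \<subseteq> U"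
  proof
    fix C assume C: "C \<in> chains A"
    then have CA: "C \<subseteq> A" and ch: "chain\<^sub>\<subseteq> C" unfolding chains_def by auto
    show "\<exists>U\<in>A. \<forall>R\<in>C. R \<subseteq> U"
    proof (cases "C = {}")
      case True then show ?thesis using SA by blast
    next
      case False
      then obtain R0 where R0: "R0 \<in> C" by blast
      have sub: "is_subring (\<Union>C)"
        unfolding is_subring_def
      proof (intro conjI)
        show "1 \<in> \<Union>C" using R0 CA sr_one unfolding A_def by blast
      next
        show "\<forall>a\<in>\<Union>C. \<forall>b\<in>\<Union>C. a - b \<in> \<Union>C \<and> a * b \<in> \<Union>C"
        proof (intro ballI)
        fix a b assume "a \<in> \<Union>C" "b \<in> \<Union>C"
        then obtain Ra Rb where "Ra \<in> C" "Rb \<in> C" "a \<in> Ra" "b \<in> Rb" by blast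
        then obtain R where R: "R \<in> C" "a \<in> R" "b \<in> R"
          using ch unfolding chain_subset_def by blast
        then have "is_subring R" using CA unfolding A_def by blast
        then have "a - b \<in> R \<and> a * b \<in> R" using R sr_diff sr_mult by blast
        then show "a - b \<in> \<Union>C \<and> a * b \<in> \<Union>C" using R by blast
      qed
      qed
      have "\<Union>C \<noteq> UNIV"
      proof
        assume U: "\<Union>C = UNIV"
        have "subset.chain UNIV C" using ch chain_subset_alt_def by blast
        then obtain R where R: "R \<in> C" "X \<subseteq> R"
          using finite_subset_Union_chain[OF X _ False] U by blast
        then have "is_subring R" "S \<subseteq> R" "R \<noteq> UNIV" using CA unfolding A_def by blast+
        then show False using gen R by blast
      qed
      moreover have "S \<subseteq> \<Union>C" using R0 CA unfolding A_def by blast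
      ultimately have "\<Union>C \<in> A" using sub unfolding A_def by blast
      then show ?thesis by blast
    qed
  qed
  then obtain M where M: "M \<in> A" "\<forall>R\<in>A. M \<subseteq> R \<longrightarrow> R = M" using Zorn_Lemma2 by blast
  have "maximal_subring M"
    unfolding maximal_subring_def
  proof (intro conjI allI impI)
    show "is_subring M" "M \<noteq> UNIV" using M unfolding A_def by blast+
    fix R assume "is_subring R \<and> M \<subseteq> R"
    then show "R = M \<or> R = UNIV" using M unfolding A_def by blast
  qed
  then show ?thesis by (rule exI)
qed


lemma aux_id: "y = (a + y * c) * d - a * d - y * (c * d - (1::'a::ring_1))"
  by (simp add: algebra_simps)

lemma case1:
  assumes M: "maximal_left_ideal M" and m: "m \<in> M" and mu: "m * u \<notin> (M::'a::ring_1 set)"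
  shows "\<exists>S::'a set. maximal_subring S"
proof -
  have li: "left_ideal M" using M unfolding maximal_left_ideal_def by blast
  define Q where "Q = {r. \<forall>m\<in>M. m * r \<in> M}"
  have Qsub: "is_subring Q"
  proof -
    have "\<forall>m\<in>M. m * (a - b) \<in> M" if "\<forall>m\<in>M. m * a \<in> M" "\<forall>m\<in>M. m * b \<in> M" for a b
      using that li_diff[OF li] by (simp add: right_diff_distrib)
    moreover have "\<forall>m\<in>M. m * (a * b) \<in> M" if "\<forall>m\<in>M. m * a \<in> M" "\<forall>m\<in>M. m * b \<in> M" for a b
      using that by (metis mult.assoc)
    ultimately show ?thesis unfolding is_subring_def Q_def by (simp only: mem_Collect_eq mult_1_right) blast
  qed
  have uQ: "u \<notin> Q" using m mu unfolding Q_def by blast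
  have MQ: "M \<subseteq> Q" unfolding Q_def using li_mult[OF li] by blast
  define L where "L = {a + b * u | a b. a \<in> M \<and> b \<in> M}"
  have "left_ideal L"
    unfolding left_ideal_def
  proof (intro conjI ballI allI)
    have "(0::'a) = 0 + 0 * u" by simp
    then show "0 \<in> L" unfolding L_def using li_0[OF li] by blast
  next
    fix p q assume "p \<in> L" "q \<in> L"
    then obtain a b a' b' where "p = a + b * u" "a \<in> M" "b \<in> M" "q = a' + b' * u" "a' \<in> M" "b' \<in> M"
      unfolding L_def by blast
    then have "p - q = (a - a') + (b - b') * u" "a - a' \<in> M" "b - b' \<in> M"
      by (auto simp: algebra_simps li_diff[OF li])
    then show "p - q \<in> L" unfolding L_def by blast
  next
    fix r p assume "p \<in> L"
    then obtain a b where "p = a + b * u" "a \<in> M" "b \<in> M" unfolding L_def by blast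
    then have "r * p = r * a + (r * b) * u" "r * a \<in> M" "r * b \<in> M"
      by (auto simp: algebra_simps li_mult[OF li])
    then show "r * p \<in> L" unfolding L_def by blast
  qed
  moreover have "M \<subseteq> L"
  proof
    fix a assume "a \<in> M"
    moreover have "a = a + 0 * u" by simp
    ultimately show "a \<in> L" unfolding L_def using li_0[OF li] by blast
  qed
  moreover have "m * u \<in> L"
  proof -
    have "m * u = 0 + m * u" by simp
    then show ?thesis unfolding L_def using li_0[OF li] m by blast
  qed
  ultimately have LU: "L = UNIV" using M mu unfolding maximal_left_ideal_def by blast
  show ?thesis
  proof (rule maxsub_exists[OF Qsub _ _, of "{u}"])
    show "Q \<noteq> UNIV" using uQ by blast
    show "finite {u}" by simp
    fix R assume R: "is_subring R" "Q \<subseteq> R" "{u} \<subseteq> R"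
    show "R = UNIV"
    proof (rule set_eqI, rule iffI)
      fix y :: 'a
      have "y \<in> L" using LU by simp
      then obtain a b where "y = a + b * u" "a \<in> M" "b \<in> M" unfolding L_def by blast
      then have "a \<in> R" "b \<in> R" "u \<in> R" "y = a + b * u" using R MQ by auto
      then show "y \<in> R" using sr_add[OF R(1)] sr_mult[OF R(1)] by simp
    qed simp
  qed
qed

lemma case2:
  assumes M: "maximal_left_ideal M" and two: "\<And>m r. m \<in> M \<Longrightarrow> m * r \<in> M"
    and fc: "\<forall>i<n. f i \<in> ring_center"
    and ft: "t ^ n + (\<Sum>i<n. f i * t ^ i) = (0::'a::ring_1)"
    and tx: "t * x - x * t \<notin> M"
  shows "\<exists>S::'a set. maximal_subring S"
proof -
  have li: "left_ideal M" and nU: "M \<noteq> UNIV" using M unfolding maximal_left_ideal_def by blast+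
  define S where "S = {y. t * y - y * t \<in> M}"
  have Ssub: "is_subring S"
    unfolding is_subring_def S_def
  proof (intro conjI ballI CollectI)
    show "t * 1 - 1 * t \<in> M" using li_0[OF li] by simp
  next
    fix a b assume a: "a \<in> {y. t * y - y * t \<in> M}" and b: "b \<in> {y. t * y - y * t \<in> M}"
    have "t * (a - b) - (a - b) * t = (t * a - a * t) - (t * b - b * t)" by (simp add: algebra_simps)
    then show "t * (a - b) - (a - b) * t \<in> M" using a b li_diff[OF li] by simp
    have "t * (a * b) - (a * b) * t = (t * a - a * t) * b + a * (t * b - b * t)" by (simp add: algebra_simps)
    then show "t * (a * b) - (a * b) * t \<in> M" using a b li_add[OF li] two li_mult[OF li] by simp
  qed
  have xS: "x \<notin> S" using tx unfolding S_def by simp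
  have MS: "M \<subseteq> S"
  proof
    fix m assume "m \<in> M"
    then show "m \<in> S" unfolding S_def using li_mult[OF li] two li_diff[OF li] by blast
  qed
  define indep where "indep k z \<longleftrightarrow> (\<forall>c. (\<forall>i<k. c i \<in> S) \<and> (\<Sum>i<k. z i * c i) \<in> M \<longrightarrow> (\<forall>i<k. c i \<in> M))" for k :: nat and z
  have bound: "k \<le> n" if "indep k z" for k z
  proof (rule ccontr)
    assume "\<not> k \<le> n"
    then have "n < card {..<k}" by simp
    from dep[OF M two fc ft _ this, of z] obtain c where
      c: "\<forall>i\<in>{..<k}. t * c i - c i * t \<in> M" "\<exists>i\<in>{..<k}. c i \<notin> M" "(\<Sum>i<k. z i * c i) \<in> M" by auto
    have "\<forall>i<k. c i \<in> S" using c(1) unfolding S_def by simp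
    then have "\<forall>i<k. c i \<in> M" using that c(3) unfolding indep_def by blast
    then show False using c(2) by auto
  qed
  define K where "K = {k. \<exists>z. indep k z}"
  have "indep 0 (\<lambda>_. 0)" unfolding indep_def by blast
  then have K0: "0 \<in> K" unfolding K_def mem_Collect_eq by (intro exI[of _ "\<lambda>_. 0"])
  have "K \<subseteq> {..n}"
  proof
    fix k assume "k \<in> K"
    then obtain z where "indep k z" unfolding K_def by (rule CollectE) (erule exE)
    then show "k \<in> {..n}" using bound by simp
  qed
  then have fK: "finite K" using finite_subset by blast
  have "Max K \<in> K" using Max_in[OF fK] K0 by blast
  define k where "k = Max K"
  obtain z where z: "indep k z" using \<open>Max K \<in> K\<close> unfolding K_def k_def by blast
  show ?thesis
  proof (rule maxsub_exists[OF Ssub _ _, of "z ` {..<k}"])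
    show "S \<noteq> UNIV" using xS by blast
    show "finite (z ` {..<k})" by simp
    fix R assume R: "is_subring R" "S \<subseteq> R" "z ` {..<k} \<subseteq> R"
    show "R = UNIV"
    proof (rule set_eqI, rule iffI)
      fix y :: 'a
      define z' where "z' = z(k := y)"
      have "\<not> indep (Suc k) z'"
      proof
        assume "indep (Suc k) z'"
        then have "Suc k \<in> K" unfolding K_def by blast
        then have "Suc k \<le> k" unfolding k_def using fK by simp
        then show False by simp
      qed
      then obtain c where c: "\<forall>i<Suc k. c i \<in> S" "(\<Sum>i<Suc k. z' i * c i) \<in> M" "\<exists>i<Suc k. c i \<notin> M"
        unfolding indep_def by blast
      have sumeq: "(\<Sum>i<Suc k. z' i * c i) = (\<Sum>i<k. z i * c i) + y * c k"
      proof -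
        have "(\<Sum>i<k. z' i * c i) = (\<Sum>i<k. z i * c i)"
          by (rule sum.cong) (auto simp: z'_def)
        then show ?thesis by (simp add: z'_def)
      qed
      have ck: "c k \<notin> M"
      proof
        assume ckM: "c k \<in> M"
        then have "y * c k \<in> M" using li_mult[OF li] by blast
        then have "(\<Sum>i<Suc k. z' i * c i) - y * c k \<in> M" using c(2) li_diff[OF li] by blast
        then have "(\<Sum>i<k. z i * c i) \<in> M" using sumeq by simp
        then have "\<forall>i<k. c i \<in> M" using z c(1) unfolding indep_def by auto
        then show False using c(3) ckM by (auto simp: less_Suc_eq)
      qed
      obtain d where d: "c k * d - 1 \<in> M" "d * c k - 1 \<in> M" using inv_mod[OF M two ck] by blast
      have ckS: "t * c k - c k * t \<in> M" using c(1) unfolding S_def by simp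
      have dS: "d \<in> S"
      proof -
        have "t * d - d * t = - (d * t * (1 - c k * d) + d * (t * c k - c k * t) * d + (d * c k - 1) * t * d)"
          by (simp add: algebra_simps)
        moreover have "d * t * (1 - c k * d) \<in> M"
        proof -
          have "1 - c k * d = - (c k * d - 1)" by simp
          then show ?thesis using li_mult[OF li li_neg[OF li d(1)]] by simp
        qed
        moreover have "d * (t * c k - c k * t) * d \<in> M" using two li_mult[OF li ckS] by blast
        moreover have "(d * c k - 1) * t * d \<in> M" using two d(2) by blast
        ultimately have "- (d * t * (1 - c k * d) + d * (t * c k - c k * t) * d + (d * c k - 1) * t * d) \<in> M"
          using li_add[OF li] li_neg[OF li] by blast
        then show ?thesis unfolding S_def using \<open>t * d - d * t = _\<close> by simp
      qed
      have yeq: "y = (\<Sum>i<Suc k. z' i * c i) * d - (\<Sum>i<k. z i * (c i * d)) - y * (c k * d - 1)"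
      proof -
        have "(\<Sum>i<k. z i * (c i * d)) = (\<Sum>i<k. z i * c i) * d" by (simp add: sum_distrib_right mult.assoc)
        then show ?thesis unfolding sumeq using aux_id[of y "\<Sum>i<k. z i * c i" "c k" d] by simp
      qed
      have p1: "(\<Sum>i<Suc k. z' i * c i) * d \<in> R" using two c(2) MS R(2) by blast
      have p2: "(\<Sum>i<k. z i * (c i * d)) \<in> R"
      proof (rule sr_sum[OF R(1)])
        fix i assume "i \<in> {..<k}"
        then have "z i \<in> R" "c i \<in> S" using R(3) c(1) by auto
        then show "z i * (c i * d) \<in> R" using sr_mult[OF R(1)] sr_mult[OF Ssub] dS R(2) by blast
      qed simp
      have p3: "y * (c k * d - 1) \<in> R" using li_mult[OF li d(1)] MS R(2) by blast
      show "y \<in> R" using yeq p1 p2 p3 sr_diff[OF R(1)] by metis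
    qed simp
  qed
qed

theorem corollary3p13:
  assumes "jacobson_radical = ({0} :: 'a::ring_1 set)"
  shows "(\<exists>S :: 'a set. maximal_subring S) \<or> integrally_closed_in (ring_center :: 'a set)"
proof (cases "\<exists>S :: 'a set. maximal_subring S")
  case True then show ?thesis by blast
next
  case False
  have "integrally_closed_in (ring_center :: 'a set)"
    unfolding integrally_closed_in_def
  proof (intro allI impI)
    fix t :: 'a
    assume "\<exists>n c. (\<forall>i<n. c i \<in> ring_center) \<and> t ^ n + (\<Sum>i<n. c i * t ^ i) = 0"
    then obtain n f where fc: "\<forall>i<n. f i \<in> ring_center" and ft: "t ^ n + (\<Sum>i<n. f i * t ^ i) = 0"
      by blast
    show "t \<in> ring_center"
    proof (rule ccontr)
      assume "t \<notin> ring_center"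
      then obtain x where tx: "t * x \<noteq> x * t" unfolding ring_center_def by blast
      then have "t * x - x * t \<noteq> 0" by simp
      then have "t * x - x * t \<notin> (jacobson_radical :: 'a set)"
      proof (intro notI)
        assume "t * x - x * t \<noteq> 0" "t * x - x * t \<in> (jacobson_radical :: 'a set)"
        then have "t * x - x * t \<in> ({0} :: 'a set)" by (simp only: assms)
        then show False using \<open>t * x - x * t \<noteq> 0\<close> by simp
      qed
      then obtain M where M: "maximal_left_ideal M" and dM: "t * x - x * t \<notin> M"
        unfolding jacobson_radical_def by blast
      show False
      proof (cases "\<forall>m\<in>M. \<forall>r. m * r \<in> M")
        case True
        have "\<exists>S::'a set. maximal_subring S" by (rule case2[OF M _ fc ft dM]) (use True in blast)
        then show False using False by blast
      next
        case nt: False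
        then obtain m u where "m \<in> M" "m * u \<notin> M" by blast
        then have "\<exists>S::'a set. maximal_subring S" using case1[OF M] by blast
        then show False using False by blast
      qed
    qed
  qed
  then show ?thesis by blast
qed

end
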